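(* Let $D\ge1$, let $Q_D$ be the $D$-dimensional hypercube on $X=\{0,1\}^D$ with adjacency matrix $A$, and let $B$ be a symmetric $A$-like matrix. Then: (i) $B_{xx}=B_{yy}$ for all $x,y\in X$; (ii) if $x,z\in X$ satisfy $\partial(x,z)=2$ and $y,w$ are the two vertices adjacent to both $x$ and $z$, then $B_{xy}=B_{zw}$ and $B_{yz}=B_{wx}$.
   Context: $Q_D$ is the graph with vertex set $X=\{0,1\}^D$, two vertices adjacent iff they differ in exactly one coordinate; $\partial$ is the path-length distance (equal to the number of coordinates in which two vertices differ). Matrices are real with rows and columns indexed by $X$. A matrix $B$ is $A$-like if $BA=AB$ and $B_{xy}=0$ for all $x,y\in X$ that are neither equal nor adjacent. *)

theory Defs
  imports Complex_Main
begin

text \<open>Vertices of Q_D: bool lists of length D (elements of {0,1}^D).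
  Matrices indexed by X: functions X => X => real (values outside X irrelevant).\<close>

definition cube :: "nat \<Rightarrow> bool list set" where
  "cube D = {xs. length xs = D}"

text \<open>Path-length distance on Q_D = Hamming distance.\<close>
definition hdist :: "bool list \<Rightarrow> bool list \<Rightarrow> nat" where
  "hdist x y = card {i. i < length x \<and> x ! i \<noteq> y ! i}"

definition adj :: "nat \<Rightarrow> bool list \<Rightarrow> bool list \<Rightarrow> bool" where
  "adj D x y \<longleftrightarrow> x \<in> cube D \<and> y \<in> cube D \<and> hdist x y = 1"

definition adjmat :: "nat \<Rightarrow> bool list \<Rightarrow> bool list \<Rightarrow> real" where
  "adjmat D x y = (if adj D x y then 1 else 0)"

definition mat_mult :: "nat \<Rightarrow> (bool list \<Rightarrow> bool list \<Rightarrow> real) \<Rightarrow> (bool list \<Rightarrow> bool list \<Rightarrow> real)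
    \<Rightarrow> bool list \<Rightarrow> bool list \<Rightarrow> real" where
  "mat_mult D M N x y = (\<Sum>z\<in>cube D. M x z * N z y)"

definition A_like :: "nat \<Rightarrow> (bool list \<Rightarrow> bool list \<Rightarrow> real) \<Rightarrow> bool" where
  "A_like D B \<longleftrightarrow>
     (\<forall>x\<in>cube D. \<forall>y\<in>cube D. mat_mult D B (adjmat D) x y = mat_mult D (adjmat D) B x y) \<and>
     (\<forall>x\<in>cube D. \<forall>y\<in>cube D. x \<noteq> y \<and> \<not> adj D x y \<longrightarrow> B x y = 0)"

definition sym_mat :: "nat \<Rightarrow> (bool list \<Rightarrow> bool list \<Rightarrow> real) \<Rightarrow> bool" where
  "sym_mat D B \<longleftrightarrow> (\<forall>x\<in>cube D. \<forall>y\<in>cube D. B x y = B y x)"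

end

theory Submission
  imports Defs
begin

definition dset :: "bool list \<Rightarrow> bool list \<Rightarrow> nat set" where
  "dset x y = {i. i < length x \<and> x ! i \<noteq> y ! i}"

lemma hdist_dset: "hdist x y = card (dset x y)"
  by (simp add: hdist_def dset_def)

lemma dset_trans:
  assumes "length x = length y" "length y = length z"
  shows "dset x z = (dset x y - dset y z) \<union> (dset y z - dset x y)"
  using assms unfolding dset_def by auto

lemma dset_sym: "length x = length y \<Longrightarrow> dset x y = dset y x"
  unfolding dset_def by auto

lemma dset_eq:
  assumes "length u = length x" "length v = length x" "dset x u = dset x v"
  shows "u = v"
proof (rule nth_equalityI)
  show "length u = length v" using assms by simp
  fix i assume i: "i < length u"
  have "(i \<in> dset x u) = (i \<in> dset x v)" using assms by simp
  then show "u ! i = v ! i" using i assms unfolding dset_def by auto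
qed

lemma adj_single:
  assumes "adj D x y" shows "\<exists>a. dset x y = {a}" "length x = D" "length y = D"
  using assms unfolding adj_def cube_def hdist_dset by (auto simp: card_1_singleton_iff)

lemma finite_cube: "finite (cube D)"
proof -
  have "cube D = {xs. set xs \<subseteq> UNIV \<and> length xs = D}" by (auto simp: cube_def)
  moreover have "finite (UNIV::bool set)" by simp
  ultimately show ?thesis using finite_lists_length_eq[of "UNIV::bool set" D] by simp
qed

lemma no_triangle:
  assumes "adj D x u" "adj D u y" shows "\<not> adj D x y"
proof
  assume h: "adj D x y"
  obtain a where a: "dset x u = {a}" using adj_single(1)[OF assms(1)] by blast
  obtain b where b: "dset u y = {b}" using adj_single(1)[OF assms(2)] by blast
  obtain c where c: "dset x y = {c}" using adj_single(1)[OF h] by blast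
  have "dset x y = ({a} - {b}) \<union> ({b} - {a})"
    using dset_trans[of x u y] a b adj_single[OF assms(1)] adj_single[OF assms(2)] by simp
  with c show False by (cases "a = b") auto
qed

lemma adj_irrefl: "\<not> adj D x x"
  by (simp add: adj_def hdist_def)

lemma common_nb:
  assumes "adj D x y" "adj D y z" "adj D x w" "adj D w z" "y \<noteq> w"
    "adj D x u" "adj D u z" "hdist x z = 2"
  shows "u = y \<or> u = w"
proof -
  have L: "length x = D" "length y = D" "length z = D" "length w = D" "length u = D"
    using adj_single assms by blast+
  obtain a where a: "dset x y = {a}" using adj_single(1)[OF assms(1)] by blast
  obtain a' where a': "dset y z = {a'}" using adj_single(1)[OF assms(2)] by blast
  obtain b where b: "dset x w = {b}" using adj_single(1)[OF assms(3)] by blast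
  obtain b' where b': "dset w z = {b'}" using adj_single(1)[OF assms(4)] by blast
  obtain c where c: "dset x u = {c}" using adj_single(1)[OF assms(6)] by blast
  obtain c' where c': "dset u z = {c'}" using adj_single(1)[OF assms(7)] by blast
  have ab: "a \<noteq> b" using a b dset_eq[of y x w] L assms(5) by auto
  have dz: "card (dset x z) = 2" using assms(8) by (simp add: hdist_dset)
  have e1: "dset x z = ({a} - {a'}) \<union> ({a'} - {a})" using dset_trans[of x y z] L a a' by simp
  have e2: "dset x z = ({b} - {b'}) \<union> ({b'} - {b})" using dset_trans[of x w z] L b b' by simp
  have e3: "dset x z = ({c} - {c'}) \<union> ({c'} - {c})" using dset_trans[of x u z] L c c' by simp
  have "a \<in> dset x z" using e1 dz by (cases "a = a'") auto
  moreover have "b \<in> dset x z" using e2 dz by (cases "b = b'") auto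
  moreover have "c \<in> dset x z" using e3 dz by (cases "c = c'") auto
  moreover have "c = a \<or> c = b"
  proof (rule ccontr)
    assume "\<not> (c = a \<or> c = b)"
    then have "{a,b,c} \<subseteq> dset x z" "card {a,b,c} = 3" using ab \<open>a \<in> dset x z\<close> \<open>b \<in> dset x z\<close> \<open>c \<in> dset x z\<close> by auto
    moreover have "finite (dset x z)" by (simp add: dset_def)
    ultimately have "3 \<le> card (dset x z)" by (metis card_mono)
    with dz show False by simp
  qed
  then show ?thesis using dset_eq[of u x y] dset_eq[of u x w] a b c L by auto
qed

lemma sum_restrict:
  assumes "finite S" "T \<subseteq> S" "\<And>u. u \<in> S - T \<Longrightarrow> f u = 0"
  shows "sum f S = sum f T"
  using assms by (metis sum.mono_neutral_right)

theorem lemma8p2: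
  fixes D :: nat and B :: "bool list \<Rightarrow> bool list \<Rightarrow> real"
  assumes "D \<ge> 1" and "sym_mat D B" and "A_like D B"
  shows "(\<forall>x\<in>cube D. \<forall>y\<in>cube D. B x x = B y y) \<and>
         (\<forall>x\<in>cube D. \<forall>z\<in>cube D. \<forall>y\<in>cube D. \<forall>w\<in>cube D.
            hdist x z = 2 \<and> adj D x y \<and> adj D y z \<and> adj D x w \<and> adj D w z \<and> y \<noteq> w
            \<longrightarrow> B x y = B z w \<and> B y z = B w x)"
proof -
  have comm: "\<And>x y. x \<in> cube D \<Longrightarrow> y \<in> cube D \<Longrightarrow>
     mat_mult D B (adjmat D) x y = mat_mult D (adjmat D) B x y"
    using assms(3) unfolding A_like_def by blast
  have zero: "\<And>x y. x \<in> cube D \<Longrightarrow> y \<in> cube D \<Longrightarrow> x \<noteq> y \<Longrightarrow> \<not> adj D x y \<Longrightarrow> B x y = 0"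
    using assms(3) unfolding A_like_def by blast
  have sym: "\<And>x y. x \<in> cube D \<Longrightarrow> y \<in> cube D \<Longrightarrow> B x y = B y x"
    using assms(2) unfolding sym_mat_def by blast
  have incube: "\<And>x y. adj D x y \<Longrightarrow> x \<in> cube D \<and> y \<in> cube D" by (simp add: adj_def)
  have step: "B x x = B y y" if xy: "adj D x y" for x y
  proof -
    have cx: "x \<in> cube D" "y \<in> cube D" using incube xy by auto
    have "mat_mult D B (adjmat D) x y = (\<Sum>u\<in>{x}. B x u * adjmat D u y)"
      unfolding mat_mult_def
    proof (rule sum_restrict[OF finite_cube])
      show "{x} \<subseteq> cube D" using cx by simp
      fix u assume u: "u \<in> cube D - {x}"
      show "B x u * adjmat D u y = 0"
      proof (cases "adj D u y")
        case True
        then have "\<not> adj D x u" using no_triangle xy by (metis adj_def hdist_dset dset_sym)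
        then show ?thesis using zero[of x u] u cx by auto
      qed (simp add: adjmat_def)
    qed
    also have "\<dots> = B x x" using xy by (simp add: adjmat_def)
    finally have 1: "mat_mult D B (adjmat D) x y = B x x" .
    have "mat_mult D (adjmat D) B x y = (\<Sum>u\<in>{y}. adjmat D x u * B u y)"
      unfolding mat_mult_def
    proof (rule sum_restrict[OF finite_cube])
      show "{y} \<subseteq> cube D" using cx by simp
      fix u assume u: "u \<in> cube D - {y}"
      show "adjmat D x u * B u y = 0"
      proof (cases "adj D x u")
        case True
        then have "\<not> adj D u y" using no_triangle xy by blast
        then show ?thesis using zero[of u y] u cx by auto
      qed (simp add: adjmat_def)
    qed
    also have "\<dots> = B y y" using xy by (simp add: adjmat_def)
    finally show ?thesis using 1 comm cx by simp
  qed
  have part1: "\<forall>x y. x \<in> cube D \<longrightarrow> y \<in> cube D \<longrightarrow> card (dset x y) = n \<longrightarrow> B x x = B y y" for n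
  proof (induction n)
    case 0
    show ?case
    proof (intro allI impI)
      fix x y assume x: "x \<in> cube D" and y: "y \<in> cube D" and c: "card (dset x y) = 0"
      have "finite (dset x y)" by (simp add: dset_def)
      then have "dset x y = dset x x" using c by (simp add: dset_def)
      then have "y = x" using dset_eq[of y x x] x y by (simp add: cube_def)
      then show "B x x = B y y" by simp
    qed
  next
    case (Suc n)
    show ?case
    proof (intro allI impI)
      fix x y assume x: "x \<in> cube D" and y: "y \<in> cube D" and c: "card (dset x y) = Suc n"
      then obtain i where i: "i \<in> dset x y" by (metis card.empty empty_iff nat.distinct(1) equals0I)
      define x' where "x' = x[i := \<not> x ! i]"
      have il: "i < length x" "x ! i \<noteq> y ! i" using i by (auto simp: dset_def)
      have lx: "length x = D" "length y = D" using x y by (auto simp: cube_def)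
      have x'c: "x' \<in> cube D" using x by (simp add: x'_def cube_def)
      have "dset x x' = {i}" using il by (auto simp: dset_def x'_def nth_list_update)
      then have axx: "adj D x x'" using x x'c by (simp add: adj_def hdist_dset)
      have "dset x' y = dset x y - {i}" using il lx
        by (auto simp: dset_def x'_def nth_list_update)
      then have "card (dset x' y) = n" using c i by (simp add: dset_def)
      then have "B x' x' = B y y" using Suc.IH x'c y by blast
      then show "B x x = B y y" using step[OF axx] by simp
    qed
  qed
  have part2: "B x y = B z w \<and> B y z = B w x"
    if h: "hdist x z = 2" "adj D x y" "adj D y z" "adj D x w" "adj D w z" "y \<noteq> w" for x y z w
  proof -
    have c: "x \<in> cube D" "y \<in> cube D" "z \<in> cube D" "w \<in> cube D" using incube h by auto
    have adjs: "\<And>a b. adj D a b \<Longrightarrow> adj D b a"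
      by (metis adj_def hdist_dset dset_sym adj_single(2,3))
    have yw: "y \<noteq> x" "w \<noteq> x" "y \<noteq> z" "w \<noteq> z" using h adj_irrefl by metis+
    have xz: "x \<noteq> z" proof assume "x = z" then show False using h(1) by (simp add: hdist_def) qed
    have gen: "mat_mult D B (adjmat D) p q = B p r + B p s \<and> mat_mult D (adjmat D) B p q = B r q + B s q"
      if g: "hdist p q = 2" "adj D p r" "adj D r q" "adj D p s" "adj D s q" "r \<noteq> s" for p q r s
    proof -
      have c: "p \<in> cube D" "q \<in> cube D" "r \<in> cube D" "s \<in> cube D" using incube g by auto
      have pq: "p \<noteq> q" proof assume "p = q" then show False using g(1) by (simp add: hdist_def) qed
      have "mat_mult D B (adjmat D) p q = (\<Sum>u\<in>{r,s}. B p u * adjmat D u q)"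
        unfolding mat_mult_def
      proof (rule sum_restrict[OF finite_cube])
        show "{r,s} \<subseteq> cube D" using c by simp
        fix u assume u: "u \<in> cube D - {r,s}"
        show "B p u * adjmat D u q = 0"
        proof (cases "adj D u q")
          case True
          have "\<not> adj D p u" using common_nb[OF g(2-6) _ True g(1)] u by auto
          moreover have "u \<noteq> p" using True g(1) by (auto simp: adj_def)
          ultimately show ?thesis using zero[of p u] u c by auto
        qed (simp add: adjmat_def)
      qed
      also have "\<dots> = B p r + B p s" using g by (simp add: adjmat_def)
      finally have 1: "mat_mult D B (adjmat D) p q = B p r + B p s" .
      have "mat_mult D (adjmat D) B p q = (\<Sum>u\<in>{r,s}. adjmat D p u * B u q)"
        unfolding mat_mult_def
      proof (rule sum_restrict[OF finite_cube])
        show "{r,s} \<subseteq> cube D" using c by simp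
        fix u assume u: "u \<in> cube D - {r,s}"
        show "adjmat D p u * B u q = 0"
        proof (cases "adj D p u")
          case True
          have "\<not> adj D u q" using common_nb[OF g(2-6) True _ g(1)] u by auto
          moreover have "u \<noteq> q" using True g(1) by (auto simp: adj_def)
          ultimately show ?thesis using zero[of u q] u c by auto
        qed (simp add: adjmat_def)
      qed
      also have "\<dots> = B r q + B s q" using g by (simp add: adjmat_def)
      finally show ?thesis using 1 by simp
    qed
    have e1: "B x y + B x w = B y z + B w z" using gen[OF h] comm c by metis
    have hyw: "hdist y w = 2"
    proof -
      obtain a where a: "dset y x = {a}" using adj_single(1)[OF adjs[OF h(2)]] by blast
      obtain b where b: "dset x w = {b}" using adj_single(1)[OF h(4)] by blast
      have L: "length y = length x" "length x = length w" using adj_single h by (metis)+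
      have "a \<noteq> b" using dset_sym L a b dset_eq[of y x w] h(6) by (metis singleton_inject)
      moreover have "dset y w = ({a} - {b}) \<union> ({b} - {a})" using dset_trans[of y x w] L a b by simp
      ultimately show ?thesis by (simp add: hdist_dset)
    qed
    have e2: "B y x + B y z = B x w + B z w"
      using gen[OF hyw adjs[OF h(2)] h(4) h(3) adjs[OF h(5)] xz] comm c by metis
    have s: "B y x = B x y" "B w z = B z w" "B w x = B x w" using sym c by auto
    show ?thesis using e1 e2 s by linarith
  qed
  show ?thesis using part1 part2 by blast
qed

end
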